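(* Let $\mathbb X,\mathbb Y$ be Euclidean spaces, $g\colon\mathbb X\to\mathbb Y$ continuous, $D\subset\mathbb Y$ closed, $\Phi(x):=g(x)-D$, $(\bar x,0)\in\operatorname{gph}\Phi$, $u\in\mathbb S_{\mathbb X}$, and assume $g$ is calm in direction $u$ at $\bar x$. Let $\mathcal E=\{e_1,\dots,e_m\}$ be an orthonormal basis of $\mathbb Y$. Consider condition (N): there do not exist $v\in\mathbb Y$ and a nonzero $\lambda\in\mathcal N_D(g(\bar x);v)$ with $0\in D^*g(\bar x;(u,v))(\lambda)$ for which there are sequences $x_k\in\mathbb X$ with $x_k\ne\bar x$, $z_k\in D$, $\lambda_k\in\mathbb Y$, $\eta_k\in\mathbb X$ satisfying $x_k\to\bar x$, $z_k\to g(\bar x)$, $\lambda_k\to\lambda$, $\eta_k\to0$, $\frac{x_k-\bar x}{\|x_k-\bar x\|}\to u$, $\frac{z_k-g(\bar x)}{\|x_k-\bar x\|}\to v$, $\frac{g(x_k)-g(\bar x)}{\|x_k-\bar x\|}\to v$, and for all $k$ and $i$: $\eta_k\in\widehat D^*g(x_k)(\lambda_k)$, $\lambda_k\in\widehat{\mathcal N}_D(z_k)$, and $\langle\lambda,e_i\rangle\langle g(x_k)-z_k,e_i\rangle>0$ whenever $\langle\lambda,e_i\rangle\ne0$. If (N) holds, then $\Phi$ is quasi-normal in direction $u$ at $(\bar x,0)$ w.r.t. $\mathcal E$. Moreover, if $g$ is calm at every point near $\bar x$, then (N) is equivalent to quasi-normality of $\Phi$ in direction $u$ at $(\bar x,0)$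 w.r.t. $\mathcal E$.
   Context: $g$ is calm at $x$ in direction $u$ if there are $\varepsilon,\delta,L>0$ with $\|g(x')-g(x)\|\le L\|x'-x\|$ for all $x'\in x+\mathbb B_{\varepsilon,\delta}(u)$, where $\mathbb B_{\varepsilon,\delta}(u)=\{w\mid\|\|w\|u-\|u\|w\|\le\delta\|u\|\|w\|,\ \|w\|\le\varepsilon\}$; calm at $x$ means this with $u=0$. $\widehat{\mathcal N}$ is the regular normal cone, $\mathcal N_Q(z;w)$ the directional limiting normal cone (all $\eta$ with $w_k\to w$, $t_k\downarrow0$, $\eta_k\to\eta$, $\eta_k\in\widehat{\mathcal N}_Q(z+t_kw_k)$). For single-valued $g$: $\widehat D^*g(x)(\lambda)=\{x^*\mid(x^*,-\lambda)\in\widehat{\mathcal N}_{\operatorname{gph}g}(x,g(x))\}$ and $D^*g(\bar x;(u,v))(\lambda)=\{x^*\mid(x^*,-\lambda)\in\mathcal N_{\operatorname{gph}g}((\bar x,g(\bar x));(u,v))\}$; for set-valued $\Phi$, $\widehat D^*\Phi$ and $D^*\Phi((\bar x,\bar y);(u,v))$ are defined analogously with $\operatorname{gph}\Phi$. Quasi-normality in direction $u$ at $(\bar x,0)$ w.r.t. $\mathcal E$: there is no nonzero $\lambda$ with $0\in D^*\Phi((\bar x,0);(u,0))(\lambda)$ for which there exist $(x_k,y_k)\in\operatorname{gph}\Phi$ with $x_k\ne\bar x$, $\lambda_k$, $\eta_k$ with $x_k\to\bar x$, $y_k\to0$, $\lambda_k\to\lambda$, $\eta_k\to0$, $\frac{x_k-\bar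 x}{\|x_k-\bar x\|}\to u$, $\frac{y_k}{\|x_k-\bar x\|}\to0$, and for all $k,i$: $\eta_k\in\widehat D^*\Phi(x_k,y_k)(\lambda_k)$ and $\langle\lambda,e_i\rangle\langle y_k,e_i\rangle>0$ whenever $\langle\lambda,e_i\rangle\ne0$. *)

theory Defs
  imports "HOL-Analysis.Analysis"
begin

definition regular_normal :: "'a::euclidean_space set \<Rightarrow> 'a \<Rightarrow> 'a set" where
  "regular_normal Q z = {\<eta>. z \<in> Q \<and>
     (\<forall>\<epsilon>>0. \<exists>\<delta>>0. \<forall>z'\<in>Q. norm (z' - z) < \<delta> \<longrightarrow> \<eta> \<bullet> (z' - z) \<le> \<epsilon> * norm (z' - z))}"

definition dir_normal :: "'a::euclidean_space set \<Rightarrow> 'a \<Rightarrow> 'a \<Rightarrow> 'a set" where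
  "dir_normal Q z w = {\<eta>. \<exists>(t::nat \<Rightarrow> real) wk \<eta>k.
     (\<forall>k. t k > 0) \<and> t \<longlonglongrightarrow> 0 \<and> wk \<longlonglongrightarrow> w \<and> \<eta>k \<longlonglongrightarrow> \<eta> \<and>
     (\<forall>k. \<eta>k k \<in> regular_normal Q (z + t k *\<^sub>R wk k))}"

definition graph_fun :: "('a \<Rightarrow> 'b) \<Rightarrow> ('a \<times> 'b) set" where
  "graph_fun g = {(x, g x) | x. True}"

definition graph_mult :: "('a \<Rightarrow> 'b set) \<Rightarrow> ('a \<times> 'b) set" where
  "graph_mult \<Phi> = {(x, y). y \<in> \<Phi> x}"

definition reg_coderiv_fun :: "('a::euclidean_space \<Rightarrow> 'b::euclidean_space) \<Rightarrow> 'a \<Rightarrow> 'b \<Rightarrow> 'a set" where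
  "reg_coderiv_fun g x lam = {xs. (xs, - lam) \<in> regular_normal (graph_fun g) (x, g x)}"

definition dir_coderiv_fun :: "('a::euclidean_space \<Rightarrow> 'b::euclidean_space) \<Rightarrow> 'a \<Rightarrow> 'a \<times> 'b \<Rightarrow> 'b \<Rightarrow> 'a set" where
  "dir_coderiv_fun g x uv lam = {xs. (xs, - lam) \<in> dir_normal (graph_fun g) (x, g x) uv}"

definition reg_coderiv_mult :: "('a::euclidean_space \<Rightarrow> 'b::euclidean_space set) \<Rightarrow> 'a \<Rightarrow> 'b \<Rightarrow> 'b \<Rightarrow> 'a set" where
  "reg_coderiv_mult \<Phi> x y lam = {xs. (xs, - lam) \<in> regular_normal (graph_mult \<Phi>) (x, y)}"

definition dir_coderiv_mult :: "('a::euclidean_space \<Rightarrow> 'b::euclidean_space set) \<Rightarrow> 'a \<times> 'b \<Rightarrow> 'a \<times> 'b \<Rightarrow> 'b \<Rightarrow> 'a set" where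
  "dir_coderiv_mult \<Phi> xy uv lam = {xs. (xs, - lam) \<in> dir_normal (graph_mult \<Phi>) xy uv}"

definition dir_nbhd :: "real \<Rightarrow> real \<Rightarrow> 'a::real_normed_vector \<Rightarrow> 'a set" where
  "dir_nbhd \<epsilon> \<delta> u = {w. norm (norm w *\<^sub>R u - norm u *\<^sub>R w) \<le> \<delta> * norm u * norm w \<and> norm w \<le> \<epsilon>}"

definition calm_dir :: "('a::real_normed_vector \<Rightarrow> 'b::real_normed_vector) \<Rightarrow> 'a \<Rightarrow> 'a \<Rightarrow> bool" where
  "calm_dir g x u \<longleftrightarrow> (\<exists>\<epsilon>>0. \<exists>\<delta>>0. \<exists>L>0. \<forall>w\<in>dir_nbhd \<epsilon> \<delta> u.
      norm (g (x + w) - g x) \<le> L * norm w)"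

definition calm :: "('a::real_normed_vector \<Rightarrow> 'b::real_normed_vector) \<Rightarrow> 'a \<Rightarrow> bool" where
  "calm g x \<longleftrightarrow> calm_dir g x 0"

definition orthonormal_basis :: "'a::euclidean_space set \<Rightarrow> bool" where
  "orthonormal_basis E \<longleftrightarrow> pairwise orthogonal E \<and> (\<forall>e\<in>E. norm e = 1) \<and> span E = UNIV"

definition quasi_normal_dir :: "('a::euclidean_space \<Rightarrow> 'b::euclidean_space set) \<Rightarrow> 'a \<Rightarrow> 'a \<Rightarrow> 'b set \<Rightarrow> bool" where
  "quasi_normal_dir \<Phi> xb u E \<longleftrightarrow> \<not> (\<exists>lam. lam \<noteq> 0 \<and> 0 \<in> dir_coderiv_mult \<Phi> (xb, 0) (u, 0) lam \<and>
     (\<exists>(xk::nat \<Rightarrow> 'a) (yk::nat \<Rightarrow> 'b) lamk \<eta>k.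
        (\<forall>k. (xk k, yk k) \<in> graph_mult \<Phi> \<and> xk k \<noteq> xb) \<and>
        xk \<longlonglongrightarrow> xb \<and> yk \<longlonglongrightarrow> 0 \<and> lamk \<longlonglongrightarrow> lam \<and> \<eta>k \<longlonglongrightarrow> 0 \<and>
        (\<lambda>k. (xk k - xb) /\<^sub>R norm (xk k - xb)) \<longlonglongrightarrow> u \<and>
        (\<lambda>k. yk k /\<^sub>R norm (xk k - xb)) \<longlonglongrightarrow> 0 \<and>
        (\<forall>k. \<eta>k k \<in> reg_coderiv_mult \<Phi> (xk k) (yk k) (lamk k) \<and>
           (\<forall>e\<in>E. lam \<bullet> e \<noteq> 0 \<longrightarrow> (lam \<bullet> e) * (yk k \<bullet> e) > 0))))"

definition condition_N :: "('a::euclidean_space \<Rightarrow> 'b::euclidean_space) \<Rightarrow> 'b set \<Rightarrow> 'a \<Rightarrow> 'a \<Rightarrow> 'b set \<Rightarrow> bool" where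
  "condition_N g D xb u E \<longleftrightarrow> \<not> (\<exists>v lam. lam \<noteq> 0 \<and> lam \<in> dir_normal D (g xb) v \<and>
     0 \<in> dir_coderiv_fun g xb (u, v) lam \<and>
     (\<exists>(xk::nat \<Rightarrow> 'a) (zk::nat \<Rightarrow> 'b) lamk \<eta>k.
        (\<forall>k. xk k \<noteq> xb \<and> zk k \<in> D) \<and>
        xk \<longlonglongrightarrow> xb \<and> zk \<longlonglongrightarrow> g xb \<and> lamk \<longlonglongrightarrow> lam \<and> \<eta>k \<longlonglongrightarrow> 0 \<and>
        (\<lambda>k. (xk k - xb) /\<^sub>R norm (xk k - xb)) \<longlonglongrightarrow> u \<and>
        (\<lambda>k. (zk k - g xb) /\<^sub>R norm (xk k - xb)) \<longlonglongrightarrow> v \<and>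
        (\<lambda>k. (g (xk k) - g xb) /\<^sub>R norm (xk k - xb)) \<longlonglongrightarrow> v \<and>
        (\<forall>k. \<eta>k k \<in> reg_coderiv_fun g (xk k) (lamk k) \<and> lamk k \<in> regular_normal D (zk k) \<and>
           (\<forall>e\<in>E. lam \<bullet> e \<noteq> 0 \<longrightarrow> (lam \<bullet> e) * ((g (xk k) - zk k) \<bullet> e) > 0))))"

end

theory Submission
  imports Defs
begin

lemma lemA:
  fixes g :: "'a::euclidean_space \<Rightarrow> 'b::euclidean_space"
  assumes "(\<eta>, - lam) \<in> regular_normal (graph_mult (\<lambda>x. {g x - d | d. d \<in> D})) (x, y)"
  shows "(\<eta>, - lam) \<in> regular_normal (graph_fun g) (x, g x) \<and> lam \<in> regular_normal D (g x - y)"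
proof
  from assms have mem: "(x, y) \<in> graph_mult (\<lambda>x. {g x - d | d. d \<in> D})"
    and H: "\<And>e. e > 0 \<Longrightarrow> \<exists>\<delta>>0. \<forall>z'\<in>graph_mult (\<lambda>x. {g x - d | d. d \<in> D}).
        norm (z' - (x, y)) < \<delta> \<longrightarrow> (\<eta>, - lam) \<bullet> (z' - (x, y)) \<le> e * norm (z' - (x, y))"
    unfolding regular_normal_def by auto
  from mem have zD: "g x - y \<in> D" unfolding graph_mult_def by auto
  show "(\<eta>, - lam) \<in> regular_normal (graph_fun g) (x, g x)"
    unfolding regular_normal_def
  proof (intro CollectI conjI allI impI)
    show "(x, g x) \<in> graph_fun g" unfolding graph_fun_def by auto
    fix e :: real assume "e > 0"
    then obtain \<delta> where d: "\<delta> > 0" and hd: "\<forall>z'\<in>graph_mult (\<lambda>x. {g x - d | d. d \<in> D}).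
        norm (z' - (x, y)) < \<delta> \<longrightarrow> (\<eta>, - lam) \<bullet> (z' - (x, y)) \<le> e * norm (z' - (x, y))"
      using H by blast
    show "\<exists>\<delta>>0. \<forall>z'\<in>graph_fun g. norm (z' - (x, g x)) < \<delta> \<longrightarrow> (\<eta>, - lam) \<bullet> (z' - (x, g x)) \<le> e * norm (z' - (x, g x))"
    proof (intro exI[of _ \<delta>] conjI ballI impI)
      fix z' assume z': "z' \<in> graph_fun g" "norm (z' - (x, g x)) < \<delta>"
      then obtain x' where zx: "z' = (x', g x')" unfolding graph_fun_def by auto
      have m: "(x', g x' - (g x - y)) \<in> graph_mult (\<lambda>x. {g x - d | d. d \<in> D})"
        using zD unfolding graph_mult_def by (auto intro!: exI[of _ "g x - y"])
      have eq: "(x', g x' - (g x - y)) - (x, y) = z' - (x, g x)" using zx by simp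
      show "(\<eta>, - lam) \<bullet> (z' - (x, g x)) \<le> e * norm (z' - (x, g x))"
        using hd m z'(2) unfolding eq[symmetric] by blast
    qed (use d in auto)
  qed
  show "lam \<in> regular_normal D (g x - y)"
    unfolding regular_normal_def
  proof (intro CollectI conjI allI impI)
    show "g x - y \<in> D" by fact
    fix e :: real assume "e > 0"
    then obtain \<delta> where d: "\<delta> > 0" and hd: "\<forall>z'\<in>graph_mult (\<lambda>x. {g x - d | d. d \<in> D}).
        norm (z' - (x, y)) < \<delta> \<longrightarrow> (\<eta>, - lam) \<bullet> (z' - (x, y)) \<le> e * norm (z' - (x, y))"
      using H by blast
    show "\<exists>\<delta>>0. \<forall>z'\<in>D. norm (z' - (g x - y)) < \<delta> \<longrightarrow> lam \<bullet> (z' - (g x - y)) \<le> e * norm (z' - (g x - y))"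
    proof (intro exI[of _ \<delta>] conjI ballI impI)
      fix z' assume z': "z' \<in> D" "norm (z' - (g x - y)) < \<delta>"
      have m: "(x, g x - z') \<in> graph_mult (\<lambda>x. {g x - d | d. d \<in> D})"
        using z' unfolding graph_mult_def by auto
      have eq: "(x, g x - z') - (x, y) = (0, - (z' - (g x - y)))" by simp
      have n: "norm ((x, g x - z') - (x, y)) = norm (z' - (g x - y))"
        unfolding eq by (simp add: norm_Pair norm_minus_commute)
      have i: "(\<eta>, - lam) \<bullet> ((x, g x - z') - (x, y)) = lam \<bullet> (z' - (g x - y))"
        unfolding eq by (simp add: inner_Pair inner_diff_right)
      show "lam \<bullet> (z' - (g x - y)) \<le> e * norm (z' - (g x - y))"
        using hd m z'(2) unfolding n[symmetric] i[symmetric] by blast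
    qed (use d in auto)
  qed
qed

lemma lemB:
  fixes g :: "'a::euclidean_space \<Rightarrow> 'b::euclidean_space"
  assumes G: "(\<eta>, - lam) \<in> regular_normal (graph_fun g) (x, g x)"
    and N: "lam \<in> regular_normal D z"
    and C: "calm g x"
  shows "(\<eta>, - lam) \<in> regular_normal (graph_mult (\<lambda>x. {g x - d | d. d \<in> D})) (x, g x - z)"
proof -
  from C obtain \<epsilon>0 L where e0: "\<epsilon>0 > 0" and L: "L > 0"
    and cl: "\<And>w. norm w \<le> \<epsilon>0 \<Longrightarrow> norm (g (x + w) - g x) \<le> L * norm w"
    unfolding calm_def calm_dir_def dir_nbhd_def by auto
  from G have HG: "\<And>e. e > 0 \<Longrightarrow> \<exists>\<delta>>0. \<forall>z'\<in>graph_fun g.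
        norm (z' - (x, g x)) < \<delta> \<longrightarrow> (\<eta>, - lam) \<bullet> (z' - (x, g x)) \<le> e * norm (z' - (x, g x))"
    unfolding regular_normal_def by auto
  from N have zD: "z \<in> D" and HN: "\<And>e. e > 0 \<Longrightarrow> \<exists>\<delta>>0. \<forall>z'\<in>D.
        norm (z' - z) < \<delta> \<longrightarrow> lam \<bullet> (z' - z) \<le> e * norm (z' - z)"
    unfolding regular_normal_def by auto
  show ?thesis
    unfolding regular_normal_def
  proof (intro CollectI conjI allI impI)
    show "(x, g x - z) \<in> graph_mult (\<lambda>x. {g x - d | d. d \<in> D})"
      using zD unfolding graph_mult_def by auto
    fix e :: real assume e: "e > 0"
    define e' where "e' = e / (2 * (L + 1))"
    have e': "e' > 0" using e L by (simp add: e'_def)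
    obtain d1 where d1: "d1 > 0" and h1: "\<forall>z'\<in>graph_fun g.
        norm (z' - (x, g x)) < d1 \<longrightarrow> (\<eta>, - lam) \<bullet> (z' - (x, g x)) \<le> e' * norm (z' - (x, g x))"
      using HG[OF e'] by blast
    obtain d2 where d2: "d2 > 0" and h2: "\<forall>z'\<in>D.
        norm (z' - z) < d2 \<longrightarrow> lam \<bullet> (z' - z) \<le> e' * norm (z' - z)"
      using HN[OF e'] by blast
    define \<rho> where "\<rho> = min \<epsilon>0 (min (d1 / (L + 1)) (d2 / (L + 1)))"
    have rho: "\<rho> > 0" using e0 d1 d2 L by (simp add: \<rho>_def)
    show "\<exists>\<delta>>0. \<forall>p\<in>graph_mult (\<lambda>x. {g x - d | d. d \<in> D}). norm (p - (x, g x - z)) < \<delta> \<longrightarrow>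
       (\<eta>, - lam) \<bullet> (p - (x, g x - z)) \<le> e * norm (p - (x, g x - z))"
    proof (intro exI[of _ \<rho>] conjI ballI impI rho)
      fix p assume pm: "p \<in> graph_mult (\<lambda>x. {g x - d | d. d \<in> D})"
        and pn: "norm (p - (x, g x - z)) < \<rho>"
      then obtain x' d' where p: "p = (x', g x' - d')" and d': "d' \<in> D"
        unfolding graph_mult_def by auto
      define n where "n = norm (p - (x, g x - z))"
      define a where "a = x' - x"
      define b where "b = g x' - g x"
      define c where "c = d' - z"
      have pd: "p - (x, g x - z) = (a, b - c)" unfolding p a_def b_def c_def by simp
      have na: "norm a \<le> n" unfolding n_def pd by (rule norm_fst_le)
      have nbc: "norm (b - c) \<le> n" unfolding n_def pd by (rule norm_snd_le)
      have nr: "n < \<rho>" using pn n_def by simp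
      have "norm a \<le> \<epsilon>0" using na nr \<rho>_def by linarith
      then have nb: "norm b \<le> L * norm a" using cl[of a] unfolding a_def b_def by simp
      have nc: "norm c \<le> (L + 1) * n"
      proof -
        have "c = b - (b - c)" by simp
        then have "norm c \<le> norm b + norm (b - c)" by (metis norm_triangle_ineq4)
        also have "\<dots> \<le> L * n + n" using nb na nbc L
          by (meson add_mono dual_order.trans less_imp_le mult_left_mono)
        finally show ?thesis by (simp add: algebra_simps)
      qed
      have nab: "norm (a, b) \<le> (L + 1) * n"
      proof -
        have "norm (a, b) \<le> norm a + norm b" by (rule norm_Pair_le)
        also have "\<dots> \<le> n + L * n" using nb na L
          by (meson add_mono dual_order.trans less_imp_le mult_left_mono)
        finally show ?thesis by (simp add: algebra_simps)
      qed
      have Lpos: "L + 1 > 0" using L by simp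
      have rle1: "(L + 1) * \<rho> \<le> d1"
      proof -
        have "\<rho> \<le> d1 / (L + 1)" unfolding \<rho>_def by linarith
        then have "(L + 1) * \<rho> \<le> (L + 1) * (d1 / (L + 1))" using Lpos by (intro mult_left_mono) auto
        then show ?thesis using Lpos by simp
      qed
      have rle2: "(L + 1) * \<rho> \<le> d2"
      proof -
        have "\<rho> \<le> d2 / (L + 1)" unfolding \<rho>_def by linarith
        then have "(L + 1) * \<rho> \<le> (L + 1) * (d2 / (L + 1))" using Lpos by (intro mult_left_mono) auto
        then show ?thesis using Lpos by simp
      qed
      have "(L + 1) * n < (L + 1) * \<rho>" using nr Lpos by simp
      then have lt1: "norm (a, b) < d1" and lt2: "norm c < d2" using nab nc rle1 rle2 by linarith+
      have gm: "(x', g x') \<in> graph_fun g" unfolding graph_fun_def by auto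
      have eqab: "(x', g x') - (x, g x) = (a, b)" unfolding a_def b_def by simp
      have i1: "(\<eta>, - lam) \<bullet> (a, b) \<le> e' * norm (a, b)"
        using h1 gm lt1 unfolding eqab[symmetric] by blast
      have i2: "lam \<bullet> c \<le> e' * norm c" using h2 d' lt2 unfolding c_def by blast
      have "(\<eta>, - lam) \<bullet> (p - (x, g x - z)) = (\<eta>, - lam) \<bullet> (a, b) + lam \<bullet> c"
        unfolding pd by (simp add: inner_Pair inner_diff_right)
      also have "\<dots> \<le> e' * norm (a, b) + e' * norm c" using i1 i2 by simp
      also have "\<dots> \<le> e' * ((L + 1) * n) + e' * ((L + 1) * n)"
        using nab nc e' by (meson add_mono less_imp_le mult_left_mono)
      also have "\<dots> = (2 * (L + 1) * e') * n" by (simp add: algebra_simps)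
      also have "2 * (L + 1) * e' = e" unfolding e'_def using Lpos by simp
      finally show "(\<eta>, - lam) \<bullet> (p - (x, g x - z)) \<le> e * norm (p - (x, g x - z))"
        unfolding n_def .
    qed
  qed
qed

lemma tzero:
  fixes xk :: "nat \<Rightarrow> 'a::real_normed_vector"
  assumes "xk \<longlonglongrightarrow> xb"
  shows "(\<lambda>k. norm (xk k - xb)) \<longlonglongrightarrow> 0"
  using assms by (simp add: LIM_zero tendsto_norm_zero)

lemma calm_bound:
  fixes g :: "'a::euclidean_space \<Rightarrow> 'b::euclidean_space"
  assumes C: "calm_dir g xb u" and u: "norm u = 1"
    and xk: "xk \<longlonglongrightarrow> xb" and ne: "\<And>k. xk k \<noteq> xb"
    and dir: "(\<lambda>k. (xk k - xb) /\<^sub>R norm (xk k - xb)) \<longlonglongrightarrow> u"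
  shows "\<exists>L N. \<forall>k\<ge>N. norm ((g (xk k) - g xb) /\<^sub>R norm (xk k - xb)) \<le> L"
proof -
  from C obtain \<epsilon> \<delta> L where e: "\<epsilon> > 0" and d: "\<delta> > 0"
    and cl: "\<And>w. w \<in> dir_nbhd \<epsilon> \<delta> u \<Longrightarrow> norm (g (xb + w) - g xb) \<le> L * norm w"
    unfolding calm_dir_def by blast
  have ev1: "eventually (\<lambda>k. norm (xk k - xb) < \<epsilon>) sequentially"
    using order_tendstoD(2)[OF tzero[OF xk] e] .
  have ev2: "eventually (\<lambda>k. dist ((xk k - xb) /\<^sub>R norm (xk k - xb)) u < \<delta>) sequentially"
    using tendstoD[OF dir d] .
  have "eventually (\<lambda>k. norm ((g (xk k) - g xb) /\<^sub>R norm (xk k - xb)) \<le> L) sequentially"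
    using ev1 ev2
  proof eventually_elim
    case (elim k)
    define w where "w = xk k - xb"
    have wpos: "norm w > 0" using ne[of k] by (simp add: w_def)
    have "norm w *\<^sub>R u - norm u *\<^sub>R w = norm w *\<^sub>R (u - w /\<^sub>R norm w)"
      using wpos u by (simp add: algebra_simps)
    then have "norm (norm w *\<^sub>R u - norm u *\<^sub>R w) = norm w * dist (w /\<^sub>R norm w) u"
      by (simp add: dist_norm norm_minus_commute)
    also have "\<dots> \<le> norm w * \<delta>" using elim(2) wpos unfolding w_def by simp
    finally have "w \<in> dir_nbhd \<epsilon> \<delta> u" unfolding dir_nbhd_def using u elim(1) w_def
      by (simp add: mult.commute)
    then have "norm (g (xk k) - g xb) \<le> L * norm w" using cl[of w] by (simp add: w_def)
    then show ?case using wpos by (simp add: w_def divide_simps mult.commute)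
  qed
  then show ?thesis unfolding eventually_sequentially by blast
qed

lemma part1:
  fixes g :: "'a::euclidean_space \<Rightarrow> 'b::euclidean_space"
  assumes cont: "continuous_on UNIV g" and u: "norm u = 1" and C: "calm_dir g xb u"
    and N: "condition_N g D xb u E"
  shows "quasi_normal_dir (\<lambda>x. {g x - d | d. d \<in> D}) xb u E"
proof (rule ccontr)
  let ?\<Phi> = "\<lambda>x. {g x - d | d. d \<in> D}"
  assume "\<not> quasi_normal_dir ?\<Phi> xb u E"
  then obtain lam xk yk lamk \<eta>k where lam0: "lam \<noteq> 0"
    and gm: "\<And>k. (xk k, yk k) \<in> graph_mult ?\<Phi>" and ne: "\<And>k. xk k \<noteq> xb"
    and xkl: "xk \<longlonglongrightarrow> xb" and ykl: "yk \<longlonglongrightarrow> 0" and laml: "lamk \<longlonglongrightarrow> lam"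
    and etal: "\<eta>k \<longlonglongrightarrow> 0"
    and dir: "(\<lambda>k. (xk k - xb) /\<^sub>R norm (xk k - xb)) \<longlonglongrightarrow> u"
    and ydir: "(\<lambda>k. yk k /\<^sub>R norm (xk k - xb)) \<longlonglongrightarrow> 0"
    and cod: "\<And>k. \<eta>k k \<in> reg_coderiv_mult ?\<Phi> (xk k) (yk k) (lamk k)"
    and sgn: "\<And>k e. e \<in> E \<Longrightarrow> lam \<bullet> e \<noteq> 0 \<Longrightarrow> (lam \<bullet> e) * (yk k \<bullet> e) > 0"
    unfolding quasi_normal_dir_def by blast
  define t where "t k = norm (xk k - xb)" for k
  define zk where "zk k = g (xk k) - yk k" for k
  define q where "q k = (g (xk k) - g xb) /\<^sub>R t k" for k
  have tpos: "\<And>k. t k > 0" using ne by (simp add: t_def)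
  have tl: "t \<longlonglongrightarrow> 0" unfolding t_def by (rule tzero[OF xkl])
  have AA: "\<And>k. (\<eta>k k, - lamk k) \<in> regular_normal (graph_fun g) (xk k, g (xk k)) \<and>
      lamk k \<in> regular_normal D (zk k)"
    using lemA cod unfolding reg_coderiv_mult_def zk_def by blast
  have zD: "\<And>k. zk k \<in> D" using AA unfolding regular_normal_def by blast
  obtain L N0 where LN: "\<And>k. k \<ge> N0 \<Longrightarrow> norm (q k) \<le> L"
    using calm_bound[OF C u xkl ne dir] unfolding q_def t_def by blast
  have "bounded (range (\<lambda>k. q (k + N0)))"
    using LN by (intro boundedI[of _ L]) auto
  then obtain v r where r: "strict_mono r" and qr: "((\<lambda>k. q (k + N0)) \<circ> r) \<longlonglongrightarrow> v"
    using bounded_imp_convergent_subsequence by blast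
  define s where "s k = r k + N0" for k
  have s: "strict_mono s" using r unfolding s_def strict_mono_def by simp
  have qs: "(\<lambda>k. q (s k)) \<longlonglongrightarrow> v" using qr unfolding s_def comp_def by simp
  have gxl: "(\<lambda>k. g (xk k)) \<longlonglongrightarrow> g xb"
    using cont xkl by (simp add: continuous_on_eq_continuous_at isCont_tendsto_compose)
  have zl: "zk \<longlonglongrightarrow> g xb" unfolding zk_def using tendsto_diff[OF gxl ykl] by simp
  have zdir_eq: "\<And>k. (zk k - g xb) /\<^sub>R t k = q k - yk k /\<^sub>R t k"
    unfolding zk_def q_def by (simp add: algebra_simps)
  have ydirs: "(\<lambda>k. yk (s k) /\<^sub>R t (s k)) \<longlonglongrightarrow> 0"
    using LIMSEQ_subseq_LIMSEQ[OF ydir s] unfolding t_def comp_def by simp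
  have zdirs: "(\<lambda>k. (zk (s k) - g xb) /\<^sub>R t (s k)) \<longlonglongrightarrow> v"
    unfolding zdir_eq using tendsto_diff[OF qs ydirs] by simp
  have sub: "\<And>X l. X \<longlonglongrightarrow> l \<Longrightarrow> (\<lambda>k. X (s k)) \<longlonglongrightarrow> l"
    using LIMSEQ_subseq_LIMSEQ[OF _ s] unfolding comp_def by blast
  have ts: "(\<lambda>k. t (s k)) \<longlonglongrightarrow> 0" using sub[OF tl] .
  have lam_dn: "lam \<in> dir_normal D (g xb) v"
    unfolding dir_normal_def
  proof (intro CollectI exI conjI allI)
    show "\<And>k. t (s k) > 0" using tpos by simp
    show "(\<lambda>k. t (s k)) \<longlonglongrightarrow> 0" by fact
    show "(\<lambda>k. (zk (s k) - g xb) /\<^sub>R t (s k)) \<longlonglongrightarrow> v" by fact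
    show "(\<lambda>k. lamk (s k)) \<longlonglongrightarrow> lam" using sub[OF laml] .
    fix k
    have "g xb + t (s k) *\<^sub>R ((zk (s k) - g xb) /\<^sub>R t (s k)) = zk (s k)"
      using tpos[of "s k"] by simp
    then show "lamk (s k) \<in> regular_normal D (g xb + t (s k) *\<^sub>R ((zk (s k) - g xb) /\<^sub>R t (s k)))"
      using AA by simp
  qed
  have dirs: "(\<lambda>k. (xk (s k) - xb) /\<^sub>R t (s k)) \<longlonglongrightarrow> u"
    using sub[OF dir] unfolding t_def .
  have cod_dn: "0 \<in> dir_coderiv_fun g xb (u, v) lam"
    unfolding dir_coderiv_fun_def dir_normal_def
  proof (intro CollectI exI conjI allI)
    show "\<And>k. t (s k) > 0" using tpos by simp
    show "(\<lambda>k. t (s k)) \<longlonglongrightarrow> 0" by fact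
    show "(\<lambda>k. ((xk (s k) - xb) /\<^sub>R t (s k), q (s k))) \<longlonglongrightarrow> (u, v)"
      by (intro tendsto_Pair dirs qs)
    show "(\<lambda>k. (\<eta>k (s k), - lamk (s k))) \<longlonglongrightarrow> (0, - lam)"
      by (intro tendsto_Pair tendsto_minus sub etal laml)
    fix k
    have "(xb, g xb) + t (s k) *\<^sub>R ((xk (s k) - xb) /\<^sub>R t (s k), q (s k)) = (xk (s k), g (xk (s k)))"
      using tpos[of "s k"] by (simp add: q_def)
    then show "(\<eta>k (s k), - lamk (s k)) \<in> regular_normal (graph_fun g)
        ((xb, g xb) + t (s k) *\<^sub>R ((xk (s k) - xb) /\<^sub>R t (s k), q (s k)))"
      using AA by simp
  qed
  have f1: "\<forall>k. xk (s k) \<noteq> xb \<and> zk (s k) \<in> D" using ne zD by blast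
  have f2: "(\<lambda>k. xk (s k)) \<longlonglongrightarrow> xb" using sub[OF xkl] .
  have f3: "(\<lambda>k. zk (s k)) \<longlonglongrightarrow> g xb" using sub[OF zl] .
  have f4: "(\<lambda>k. lamk (s k)) \<longlonglongrightarrow> lam" using sub[OF laml] .
  have f5: "(\<lambda>k. \<eta>k (s k)) \<longlonglongrightarrow> 0" using sub[OF etal] .
  have f6: "(\<lambda>k. (xk (s k) - xb) /\<^sub>R norm (xk (s k) - xb)) \<longlonglongrightarrow> u" using sub[OF dir] .
  have f7: "(\<lambda>k. (zk (s k) - g xb) /\<^sub>R norm (xk (s k) - xb)) \<longlonglongrightarrow> v" using zdirs unfolding t_def .
  have f8: "(\<lambda>k. (g (xk (s k)) - g xb) /\<^sub>R norm (xk (s k) - xb)) \<longlonglongrightarrow> v" using qs unfolding q_def t_def .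
  have f9: "\<forall>k. \<eta>k (s k) \<in> reg_coderiv_fun g (xk (s k)) (lamk (s k)) \<and>
      lamk (s k) \<in> regular_normal D (zk (s k)) \<and>
      (\<forall>e\<in>E. lam \<bullet> e \<noteq> 0 \<longrightarrow> (lam \<bullet> e) * ((g (xk (s k)) - zk (s k)) \<bullet> e) > 0)"
    using AA sgn unfolding reg_coderiv_fun_def zk_def by simp
  have "\<not> condition_N g D xb u E"
    unfolding condition_N_def not_not
    apply (rule exI[of _ v], rule exI[of _ lam])
    apply (intro conjI lam0 lam_dn cod_dn)
    apply (rule exI[of _ "\<lambda>k. xk (s k)"], rule exI[of _ "\<lambda>k. zk (s k)"],
        rule exI[of _ "\<lambda>k. lamk (s k)"], rule exI[of _ "\<lambda>k. \<eta>k (s k)"])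
    using f1 f2 f3 f4 f5 f6 f7 f8 f9 by blast
  then show False using N by blast
qed

lemma part2:
  fixes g :: "'a::euclidean_space \<Rightarrow> 'b::euclidean_space"
  assumes cont: "continuous_on UNIV g"
    and CN: "\<exists>r>0. \<forall>x\<in>ball xb r. calm g x"
    and Q: "quasi_normal_dir (\<lambda>x. {g x - d | d. d \<in> D}) xb u E"
  shows "condition_N g D xb u E"
proof (rule ccontr)
  let ?\<Phi> = "\<lambda>x. {g x - d | d. d \<in> D}"
  assume "\<not> condition_N g D xb u E"
  then obtain v lam xk zk lamk \<eta>k where lam0: "lam \<noteq> 0"
    and ne: "\<And>k. xk k \<noteq> xb" and zD: "\<And>k. zk k \<in> D"
    and xkl: "xk \<longlonglongrightarrow> xb" and zl: "zk \<longlonglongrightarrow> g xb" and laml: "lamk \<longlonglongrightarrow> lam"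
    and etal: "\<eta>k \<longlonglongrightarrow> 0"
    and dir: "(\<lambda>k. (xk k - xb) /\<^sub>R norm (xk k - xb)) \<longlonglongrightarrow> u"
    and zdir: "(\<lambda>k. (zk k - g xb) /\<^sub>R norm (xk k - xb)) \<longlonglongrightarrow> v"
    and gdir: "(\<lambda>k. (g (xk k) - g xb) /\<^sub>R norm (xk k - xb)) \<longlonglongrightarrow> v"
    and cod: "\<And>k. \<eta>k k \<in> reg_coderiv_fun g (xk k) (lamk k)"
    and nz: "\<And>k. lamk k \<in> regular_normal D (zk k)"
    and sgn: "\<And>k e. e \<in> E \<Longrightarrow> lam \<bullet> e \<noteq> 0 \<Longrightarrow> (lam \<bullet> e) * ((g (xk k) - zk k) \<bullet> e) > 0"
    unfolding condition_N_def by blast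
  obtain r where r: "r > 0" and cr: "\<And>x. x \<in> ball xb r \<Longrightarrow> calm g x" using CN by blast
  have "eventually (\<lambda>k. xk k \<in> ball xb r) sequentially"
    using xkl r by (simp add: tendsto_iff dist_commute)
  then obtain N0 where N0: "\<And>k. k \<ge> N0 \<Longrightarrow> xk k \<in> ball xb r"
    unfolding eventually_sequentially by blast
  define s where "s k = k + N0" for k
  have s: "strict_mono s" unfolding s_def strict_mono_def by simp
  have sub: "\<And>X l. X \<longlonglongrightarrow> l \<Longrightarrow> (\<lambda>k. X (s k)) \<longlonglongrightarrow> l"
    using LIMSEQ_subseq_LIMSEQ[OF _ s] unfolding comp_def by blast
  define t where "t k = norm (xk k - xb)" for k
  define yk where "yk k = g (xk k) - zk k" for k
  have tpos: "\<And>k. t k > 0" using ne by (simp add: t_def)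
  have tl: "t \<longlonglongrightarrow> 0" unfolding t_def by (rule tzero[OF xkl])
  have gxl: "(\<lambda>k. g (xk k)) \<longlonglongrightarrow> g xb"
    using cont xkl by (simp add: continuous_on_eq_continuous_at isCont_tendsto_compose)
  have ykl: "yk \<longlonglongrightarrow> 0" unfolding yk_def using tendsto_diff[OF gxl zl] by simp
  have ydeq: "\<And>k. yk k /\<^sub>R t k = (g (xk k) - g xb) /\<^sub>R t k - (zk k - g xb) /\<^sub>R t k"
    unfolding yk_def by (simp add: algebra_simps)
  have ydir: "(\<lambda>k. yk k /\<^sub>R t k) \<longlonglongrightarrow> 0"
    unfolding ydeq using tendsto_diff[OF gdir zdir] unfolding t_def by simp
  have BB: "\<And>k. (\<eta>k (s k), - lamk (s k)) \<in> regular_normal (graph_mult ?\<Phi>) (xk (s k), yk (s k))"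
  proof -
    fix k
    have "calm g (xk (s k))" using cr N0 by (simp add: s_def)
    then show "(\<eta>k (s k), - lamk (s k)) \<in> regular_normal (graph_mult ?\<Phi>) (xk (s k), yk (s k))"
      using lemB[OF _ nz] cod unfolding reg_coderiv_fun_def yk_def by blast
  qed
  have cod_dn: "0 \<in> dir_coderiv_mult ?\<Phi> (xb, 0) (u, 0) lam"
    unfolding dir_coderiv_mult_def dir_normal_def
  proof (intro CollectI exI conjI allI)
    show "\<And>k. t (s k) > 0" using tpos by simp
    show "(\<lambda>k. t (s k)) \<longlonglongrightarrow> 0" using sub[OF tl] .
    show "(\<lambda>k. ((xk (s k) - xb) /\<^sub>R t (s k), yk (s k) /\<^sub>R t (s k))) \<longlonglongrightarrow> (u, 0)"
      by (intro tendsto_Pair sub ydir) (use dir in \<open>simp add: t_def\<close>)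
    show "(\<lambda>k. (\<eta>k (s k), - lamk (s k))) \<longlonglongrightarrow> (0, - lam)"
      by (intro tendsto_Pair tendsto_minus sub etal laml)
    fix k
    have "(xb, 0) + t (s k) *\<^sub>R ((xk (s k) - xb) /\<^sub>R t (s k), yk (s k) /\<^sub>R t (s k)) = (xk (s k), yk (s k))"
      using tpos[of "s k"] by simp
    then show "(\<eta>k (s k), - lamk (s k)) \<in> regular_normal (graph_mult ?\<Phi>)
        ((xb, 0) + t (s k) *\<^sub>R ((xk (s k) - xb) /\<^sub>R t (s k), yk (s k) /\<^sub>R t (s k)))"
      using BB by simp
  qed
  have f1: "\<forall>k. (xk (s k), yk (s k)) \<in> graph_mult ?\<Phi> \<and> xk (s k) \<noteq> xb"
    using ne zD unfolding graph_mult_def yk_def by blast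
  have f2: "(\<lambda>k. xk (s k)) \<longlonglongrightarrow> xb" using sub[OF xkl] .
  have f3: "(\<lambda>k. yk (s k)) \<longlonglongrightarrow> 0" using sub[OF ykl] .
  have f4: "(\<lambda>k. lamk (s k)) \<longlonglongrightarrow> lam" using sub[OF laml] .
  have f5: "(\<lambda>k. \<eta>k (s k)) \<longlonglongrightarrow> 0" using sub[OF etal] .
  have f6: "(\<lambda>k. (xk (s k) - xb) /\<^sub>R norm (xk (s k) - xb)) \<longlonglongrightarrow> u" using sub[OF dir] .
  have f7: "(\<lambda>k. yk (s k) /\<^sub>R norm (xk (s k) - xb)) \<longlonglongrightarrow> 0" using sub[OF ydir] unfolding t_def .
  have f9: "\<forall>k. \<eta>k (s k) \<in> reg_coderiv_mult ?\<Phi> (xk (s k)) (yk (s k)) (lamk (s k)) \<and>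
      (\<forall>e\<in>E. lam \<bullet> e \<noteq> 0 \<longrightarrow> (lam \<bullet> e) * (yk (s k) \<bullet> e) > 0)"
    using BB sgn unfolding reg_coderiv_mult_def yk_def by simp
  have "\<not> quasi_normal_dir ?\<Phi> xb u E"
    unfolding quasi_normal_dir_def not_not
    apply (rule exI[of _ lam])
    apply (intro conjI lam0 cod_dn)
    apply (rule exI[of _ "\<lambda>k. xk (s k)"], rule exI[of _ "\<lambda>k. yk (s k)"],
        rule exI[of _ "\<lambda>k. lamk (s k)"], rule exI[of _ "\<lambda>k. \<eta>k (s k)"])
    using f1 f2 f3 f4 f5 f6 f7 f9 by blast
  then show False using Q by blast
qed

theorem proposition5p13:
  fixes g :: "'a::euclidean_space \<Rightarrow> 'b::euclidean_space"
    and D :: "'b set" and xb u :: 'a and E :: "'b set"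
  assumes "continuous_on UNIV g"
    and "closed D"
    and "g xb \<in> D"
    and "norm u = 1"
    and "calm_dir g xb u"
    and "orthonormal_basis E"
  defines "\<Phi> \<equiv> (\<lambda>x. {g x - d | d. d \<in> D})"
  shows "(condition_N g D xb u E \<longrightarrow> quasi_normal_dir \<Phi> xb u E) \<and>
         ((\<exists>r>0. \<forall>x\<in>ball xb r. calm g x) \<longrightarrow>
            (condition_N g D xb u E \<longleftrightarrow> quasi_normal_dir \<Phi> xb u E))"
  using part1[OF assms(1,4,5)] part2[OF assms(1)] unfolding \<Phi>_def by blast

end
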